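(* Let $A$ be a commutative noetherian ring and $P$ a projective $A$-module. The map $\nu:\widetilde Q(P)\to\mathcal{Q}(P)$, $\nu(f,p,s)=(f,s)$, induces a bijection $\overline{\nu}:\pi_0(\widetilde Q(P))\to\pi_0(\mathcal{Q}(P))$.
   Context: $P^*=\mathrm{Hom}_A(P,A)$ and $P[T]=P\otimes_AA[T]$. Define $\widetilde Q(P)=\{(f,p,s)\in P^*\oplus P\oplus A: f(p)+s(s-1)=0\}$ and $\mathcal{Q}(P)=\{(f,s)\in P^*\oplus A: s(1-s)\in f(P)\}$; define the same sets over $A[T]$ for $P[T]$. For $\mathcal{F}=\widetilde Q$ or $\mathcal{Q}$, $\pi_0(\mathcal{F}(P))$ is the quotient of $\mathcal{F}(P)$ by the equivalence relation generated by $H(0)\sim H(1)$ for $H(T)\in\mathcal{F}(P[T])$, where $H(t)$ is the specialization $T=t$. *)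

theory Defs
  imports Main "HOL-Computational_Algebra.Polynomial"
begin

definition noetherian_ring :: "'a::comm_ring_1 itself \<Rightarrow> bool" where
  "noetherian_ring _ \<longleftrightarrow>
     (\<forall>I::'a set. module.subspace ((*)) I \<longrightarrow>
        (\<exists>F. finite F \<and> I = module.span ((*)) F))"

text \<open>Projective: the module is a direct summand of a free module, namely the canonical
surjection from the free module on the underlying set of P (finitely supported
functions) onto P admits an A-linear section.\<close>

definition projective_module ::
  "('a::comm_ring_1 \<Rightarrow> 'b::ab_group_add \<Rightarrow> 'b) \<Rightarrow> bool" where
  "projective_module scale \<longleftrightarrow> module scale \<and>
     (\<exists>\<sigma> :: 'b \<Rightarrow> 'b \<Rightarrow> 'a.
        (\<forall>p. finite {x. \<sigma> p x \<noteq> 0}) \<and>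
        (\<forall>p q x. \<sigma> (p + q) x = \<sigma> p x + \<sigma> q x) \<and>
        (\<forall>a p. \<sigma> (scale a p) = (\<lambda>x. a * \<sigma> p x)) \<and>
        (\<forall>p. (\<Sum>x\<in>{x. \<sigma> p x \<noteq> 0}. scale (\<sigma> p x) x) = p))"

text \<open>P[T] = P \<otimes>_A A[T] is represented by polynomials with coefficients in P,
with the natural A[T]-module structure.\<close>

definition polyscale ::
  "('a::comm_ring_1 \<Rightarrow> 'b::ab_group_add \<Rightarrow> 'b) \<Rightarrow> 'a poly \<Rightarrow> 'b poly \<Rightarrow> 'b poly" where
  "polyscale scale q p =
     (\<Sum>i\<le>degree q. \<Sum>j\<le>degree p. monom (scale (coeff q i) (coeff p j)) (i + j))"

definition poly_eval ::
  "('a::comm_ring_1 \<Rightarrow> 'b::ab_group_add \<Rightarrow> 'b) \<Rightarrow> 'b poly \<Rightarrow> 'a \<Rightarrow> 'b" where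
  "poly_eval scale p t = (\<Sum>i\<le>degree p. scale (t ^ i) (coeff p i))"

text \<open>Specialization of F in P[T]^* = Hom_{A[T]}(P[T],A[T]) at T = t:
 the A-linear form p \<mapsto> F(p \<otimes> 1)(t).\<close>

definition dual_eval :: "('b::zero poly \<Rightarrow> 'a::comm_ring_1 poly) \<Rightarrow> 'a \<Rightarrow> 'b \<Rightarrow> 'a" where
  "dual_eval F t = (\<lambda>p. poly (F [:p:]) t)"

definition Qtilde ::
  "('r::comm_ring_1 \<Rightarrow> 'm::ab_group_add \<Rightarrow> 'm) \<Rightarrow> (('m \<Rightarrow> 'r) \<times> 'm \<times> 'r) set" where
  "Qtilde scale = {(f, p, s). module_hom scale ((*)) f \<and> f p + s * (s - 1) = 0}"

definition QQ ::
  "('r::comm_ring_1 \<Rightarrow> 'm::ab_group_add \<Rightarrow> 'm) \<Rightarrow> (('m \<Rightarrow> 'r) \<times> 'r) set" where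
  "QQ scale = {(f, s). module_hom scale ((*)) f \<and> s * (1 - s) \<in> range f}"

definition spec_tilde ::
  "('a::comm_ring_1 \<Rightarrow> 'b::ab_group_add \<Rightarrow> 'b) \<Rightarrow>
   (('b poly \<Rightarrow> 'a poly) \<times> 'b poly \<times> 'a poly) \<Rightarrow> 'a \<Rightarrow> (('b \<Rightarrow> 'a) \<times> 'b \<times> 'a)" where
  "spec_tilde scale H t =
     (case H of (F, p, s) \<Rightarrow> (dual_eval F t, poly_eval scale p t, poly s t))"

definition spec_QQ ::
  "(('b::zero poly \<Rightarrow> 'a::comm_ring_1 poly) \<times> 'a poly) \<Rightarrow> 'a \<Rightarrow> (('b \<Rightarrow> 'a) \<times> 'a)" where
  "spec_QQ H t = (case H of (F, s) \<Rightarrow> (dual_eval F t, poly s t))"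

definition homot_tilde ::
  "('a::comm_ring_1 \<Rightarrow> 'b::ab_group_add \<Rightarrow> 'b) \<Rightarrow> ((('b \<Rightarrow> 'a) \<times> 'b \<times> 'a) \<times> (('b \<Rightarrow> 'a) \<times> 'b \<times> 'a)) set" where
  "homot_tilde scale =
     {(spec_tilde scale H 0, spec_tilde scale H 1) | H. H \<in> Qtilde (polyscale scale)}"

definition homot_QQ ::
  "('a::comm_ring_1 \<Rightarrow> 'b::ab_group_add \<Rightarrow> 'b) \<Rightarrow> ((('b \<Rightarrow> 'a) \<times> 'a) \<times> (('b \<Rightarrow> 'a) \<times> 'a)) set" where
  "homot_QQ scale = {(spec_QQ H 0, spec_QQ H 1) | H. H \<in> QQ (polyscale scale)}"

definition equiv_gen :: "('x \<times> 'x) set \<Rightarrow> ('x \<times> 'x) set" where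
  "equiv_gen R = (R \<union> R\<inverse>)\<^sup>*"

definition pi0_tilde ::
  "('a::comm_ring_1 \<Rightarrow> 'b::ab_group_add \<Rightarrow> 'b) \<Rightarrow> (('b \<Rightarrow> 'a) \<times> 'b \<times> 'a) set set" where
  "pi0_tilde scale = Qtilde scale // equiv_gen (homot_tilde scale)"

definition pi0_QQ ::
  "('a::comm_ring_1 \<Rightarrow> 'b::ab_group_add \<Rightarrow> 'b) \<Rightarrow> (('b \<Rightarrow> 'a) \<times> 'a) set set" where
  "pi0_QQ scale = QQ scale // equiv_gen (homot_QQ scale)"

definition nu :: "(('b \<Rightarrow> 'a) \<times> 'b \<times> 'a) \<Rightarrow> (('b \<Rightarrow> 'a) \<times> 'a)" where
  "nu x = (case x of (f, p, s) \<Rightarrow> (f, s))"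

definition nu_bar ::
  "('a::comm_ring_1 \<Rightarrow> 'b::ab_group_add \<Rightarrow> 'b) \<Rightarrow> (('b \<Rightarrow> 'a) \<times> 'b \<times> 'a) set \<Rightarrow> (('b \<Rightarrow> 'a) \<times> 'a) set" where
  "nu_bar scale X = the_elem ((\<lambda>x. equiv_gen (homot_QQ scale) `` {nu x}) ` X)"

end

theory Submission
  imports Defs
begin

lemma sum_le_extend:
  fixes h :: "nat \<Rightarrow> 'b::comm_monoid_add"
  assumes "\<And>i. i > n \<Longrightarrow> h i = 0" "n \<le> m"
  shows "(\<Sum>i\<le>m. h i) = (\<Sum>i\<le>n. h i)"
  using assms by (intro sum.mono_neutral_right) auto

lemma coeff_polyscale:
  assumes "module scale"
  shows "coeff (polyscale scale q p) k = (\<Sum>i\<le>k. scale (coeff q i) (coeff p (k - i)))"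
proof -
  interpret module scale by fact
  define g where "g i j = scale (coeff q i) (coeff p j)" for i j
  have g0: "g i j = 0" if "i > degree q \<or> j > degree p" for i j
    using that by (auto simp: g_def coeff_eq_0)
  have inner: "(\<Sum>j\<le>degree p. if i + j = k then g i j else 0) = (if i \<le> k then g i (k-i) else 0)" for i
  proof (cases "i \<le> k")
    case True
    have "(\<Sum>j\<le>degree p. if i + j = k then g i j else 0) = (\<Sum>j\<le>degree p. if j = k - i then g i j else 0)"
      using True by (intro sum.cong) auto
    also have "\<dots> = (if k - i \<in> {..degree p} then g i (k-i) else 0)" by (simp add: sum.delta)
    also have "\<dots> = g i (k-i)" using g0[of i "k-i"] by auto
    finally show ?thesis using True by simp
  next
    case False
    then show ?thesis by (simp add: sum.neutral)
  qed
  have "coeff (polyscale scale q p) k = (\<Sum>i\<le>degree q. \<Sum>j\<le>degree p. if i + j = k then g i j else 0)"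
    unfolding polyscale_def g_def by (simp add: coeff_sum coeff_monom)
  also have "\<dots> = (\<Sum>i\<le>degree q. if i \<le> k then g i (k-i) else 0)" using inner by simp
  also have "\<dots> = (\<Sum>i\<le>max (degree q) k. if i \<le> k then g i (k-i) else 0)"
    by (rule sum_le_extend[symmetric]) (auto simp: g0)
  also have "\<dots> = (\<Sum>i\<le>k. if i \<le> k then g i (k-i) else 0)"
    by (rule sum_le_extend) (auto simp: g0)
  also have "\<dots> = (\<Sum>i\<le>k. g i (k-i))" by simp
  finally show ?thesis by (simp add: g_def)
qed

lemma module_polyscale:
  assumes M: "module scale"
  shows "module (polyscale scale)"
proof -
  interpret module scale by fact
  note cp = coeff_polyscale[OF M]
  show ?thesis
  proof
    fix a :: "'a poly" and x y :: "'b poly"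
    show "polyscale scale a (x + y) = polyscale scale a x + polyscale scale a y"
      by (rule poly_eqI) (simp add: cp scale_right_distrib sum.distrib)
  next
    fix a b :: "'a poly" and x :: "'b poly"
    show "polyscale scale (a + b) x = polyscale scale a x + polyscale scale b x"
      by (rule poly_eqI) (simp add: cp scale_left_distrib sum.distrib)
  next
    fix x :: "'b poly"
    show "polyscale scale 1 x = x"
    proof (rule poly_eqI)
      fix k
      have "(\<Sum>i\<le>k. scale (coeff 1 i) (coeff x (k - i))) = (\<Sum>i\<le>k. if i = 0 then coeff x k else 0)"
        by (intro sum.cong) auto
      then show "coeff (polyscale scale 1 x) k = coeff x k" by (simp add: cp)
    qed
  next
    fix a b :: "'a poly" and x :: "'b poly"
    show "polyscale scale a (polyscale scale b x) = polyscale scale (a * b) x"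
    proof (rule poly_eqI)
      fix k
      define g where "g i j = scale (coeff a i * coeff b j) (coeff x (k - i - j))" for i j
      have "coeff (polyscale scale a (polyscale scale b x)) k = (\<Sum>i\<le>k. \<Sum>j\<le>k-i. g i j)"
        by (simp add: cp g_def scale_sum_right diff_diff_add)
      also have "\<dots> = (\<Sum>(i,j)\<in>Sigma {..k} (\<lambda>i. {..k-i}). g i j)"
        by (rule sum.Sigma) auto
      also have "Sigma {..k} (\<lambda>i. {..k-i}) = {(i,j). i + j \<le> k}" by auto
      also have "(\<Sum>(i,j)\<in>{(i,j). i + j \<le> k}. g i j) = (\<Sum>m\<le>k. \<Sum>i\<le>m. g i (m - i))"
        by (rule sum.triangle_reindex_eq)
      also have "\<dots> = (\<Sum>m\<le>k. \<Sum>i\<le>m. scale (coeff a i * coeff b (m - i)) (coeff x (k - m)))"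
        by (intro sum.cong refl) (auto simp: g_def)
      also have "\<dots> = coeff (polyscale scale (a * b) x) k"
        by (simp add: cp coeff_mult scale_sum_left)
      finally show "coeff (polyscale scale a (polyscale scale b x)) k = coeff (polyscale scale (a * b) x) k" .
    qed
  qed
qed


lemma module_mult: "module ((*) :: 'a::comm_ring_1 \<Rightarrow> 'a \<Rightarrow> 'a)"
  by unfold_locales (simp_all add: algebra_simps)

lemma polyscale_const:
  assumes M: "module scale"
  shows "polyscale scale [:a:] p = map_poly (scale a) p"
proof -
  interpret module scale by fact
  show ?thesis
  proof (rule poly_eqI)
    fix k
    have "(\<Sum>i\<le>k. scale (coeff [:a:] i) (coeff p (k - i))) = (\<Sum>i\<le>k. if i = 0 then scale a (coeff p k) else 0)"
      by (intro sum.cong) (auto simp: coeff_pCons split: nat.split)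
    then show "coeff (polyscale scale [:a:] p) k = coeff (map_poly (scale a) p) k"
      by (simp add: coeff_polyscale[OF M] coeff_map_poly)
  qed
qed

lemma polyscale_const_const:
  assumes M: "module scale"
  shows "polyscale scale [:a:] [:c:] = [:scale a c:]"
proof -
  interpret module scale by fact
  show ?thesis by (simp add: polyscale_const[OF M] map_poly_pCons)
qed

lemma polyscale_monom_const:
  assumes M: "module scale"
  shows "polyscale scale (monom 1 i) [:c:] = monom c i"
proof -
  interpret module scale by fact
  show ?thesis
  proof (rule poly_eqI)
    fix k
    have "(\<Sum>j\<le>k. scale (coeff (monom 1 i) j) (coeff [:c:] (k - j))) = (\<Sum>j\<le>k. if j = i then (if k = i then c else 0) else 0)"
      by (intro sum.cong) (auto simp: coeff_monom coeff_pCons split: nat.split)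
    then show "coeff (polyscale scale (monom 1 i) [:c:]) k = coeff (monom c i) k"
      by (auto simp: coeff_polyscale[OF M] coeff_monom)
  qed
qed

lemma const_sum: "[:sum f A:] = (\<Sum>x\<in>A. [:f x:])"
  by (rule poly_eqI) (simp add: coeff_sum coeff_pCons split: nat.split)

lemma hom_decomp:
  assumes M: "module scale" and H: "module_hom (polyscale scale) (*) F"
  shows "F p = (\<Sum>i\<le>degree p. monom 1 i * F [:coeff p i:])"
proof -
  interpret module_hom "polyscale scale" "(*)" F by fact
  have "F p = F (\<Sum>i\<le>degree p. polyscale scale (monom 1 i) [:coeff p i:])"
    by (simp add: polyscale_monom_const[OF M] poly_as_sum_of_monoms)
  also have "\<dots> = (\<Sum>i\<le>degree p. monom 1 i * F [:coeff p i:])"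
    by (simp add: sum scale)
  finally show ?thesis .
qed

lemma dual_eval_hom:
  assumes M: "module scale" and H: "module_hom (polyscale scale) (*) F"
  shows "module_hom scale (*) (dual_eval F t)"
proof -
  interpret module_hom "polyscale scale" "(*)" F by fact
  show ?thesis
    unfolding module_hom_iff
  proof (intro conjI allI)
    show "module scale" by fact
    show "module ((*) :: 'a \<Rightarrow> _)" by (rule module_mult)
    fix x y
    show "dual_eval F t (x + y) = dual_eval F t x + dual_eval F t y"
      unfolding dual_eval_def using add[of "[:x:]" "[:y:]"] by simp
  next
    fix c x
    show "dual_eval F t (scale c x) = c * dual_eval F t x"
      unfolding dual_eval_def using scale[of "[:c:]" "[:x:]"] by (simp add: polyscale_const_const[OF M])
  qed
qed

lemma dual_eval_poly_eval:
  assumes M: "module scale" and H: "module_hom (polyscale scale) (*) F"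
  shows "dual_eval F t (poly_eval scale p t) = poly (F p) t"
proof -
  interpret module_hom "polyscale scale" "(*)" F by fact
  have "dual_eval F t (poly_eval scale p t) =
     poly (F (\<Sum>i\<le>degree p. polyscale scale [:t ^ i:] [:coeff p i:])) t"
    by (simp add: dual_eval_def poly_eval_def const_sum polyscale_const_const[OF M])
  also have "\<dots> = (\<Sum>i\<le>degree p. t ^ i * poly (F [:coeff p i:]) t)"
    by (simp add: sum scale poly_sum)
  also have "\<dots> = poly (F p) t"
    by (subst hom_decomp[OF M H]) (simp add: poly_sum poly_monom)
  finally show ?thesis .
qed

lemma spec_tilde_in:
  assumes M: "module scale" and H: "H \<in> Qtilde (polyscale scale)"
  shows "spec_tilde scale H t \<in> Qtilde scale"
proof -
  obtain F p S where HH: "H = (F, p, S)" by (cases H) auto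
  have F: "module_hom (polyscale scale) (*) F" and E: "F p + S * (S - 1) = 0"
    using H by (auto simp: Qtilde_def HH)
  have "poly (F p + S * (S - 1)) t = 0" using E by simp
  then show ?thesis
    by (simp add: Qtilde_def spec_tilde_def HH dual_eval_hom[OF M F] dual_eval_poly_eval[OF M F])
qed


lemma poly_eval_ext:
  assumes M: "module scale" and "degree p \<le> n"
  shows "poly_eval scale p t = (\<Sum>i\<le>n. scale (t ^ i) (coeff p i))"
proof -
  interpret module scale by fact
  show ?thesis unfolding poly_eval_def
    by (rule sum_le_extend[symmetric]) (use assms(2) in \<open>auto simp: coeff_eq_0\<close>)
qed

lemma map_poly_hom:
  assumes M: "module scale" and f: "module_hom scale (*) f"
  shows "module_hom (polyscale scale) (*) (map_poly f)"
proof -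
  interpret module_hom scale "(*)" f by fact
  show ?thesis unfolding module_hom_iff
  proof (intro conjI allI)
    show "module (polyscale scale)" by (rule module_polyscale[OF M])
    show "module ((*) :: 'a poly \<Rightarrow> _)" by (rule module_mult)
    fix x y
    show "map_poly f (x + y) = map_poly f x + map_poly f y"
      by (rule poly_eqI) (simp add: coeff_map_poly add)
  next
    fix c x
    show "map_poly f (polyscale scale c x) = c * map_poly f x"
      by (rule poly_eqI) (simp add: coeff_map_poly coeff_polyscale[OF M] coeff_mult sum scale)
  qed
qed

lemma fiber_homot:
  assumes M: "module scale" and f: "module_hom scale (*) f"
    and E: "f p0 + s * (s - 1) = 0" and E1: "f p1 = f p0"
  shows "((f, p0, s), (f, p1, s)) \<in> homot_tilde scale"
proof -
  interpret module_hom scale "(*)" f by fact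
  define H where "H = (map_poly f, [:p0, p1 - p0:], [:s:])"
  have fd: "f (p1 - p0) = 0" using E1 by (simp add: diff)
  have "map_poly f [:p0, p1 - p0:] = [:f p0:]"
    by (rule poly_eqI) (simp add: coeff_map_poly coeff_pCons fd split: nat.split)
  then have "map_poly f [:p0, p1 - p0:] + [:s:] * ([:s:] - 1) = [:f p0 + s * (s - 1):]"
    by (simp add: algebra_simps one_pCons)
  then have H: "H \<in> Qtilde (polyscale scale)"
    using E by (simp add: H_def Qtilde_def map_poly_hom[OF M f])
  have de: "dual_eval (map_poly f) t = f" for t
    by (rule ext) (simp add: dual_eval_def map_poly_pCons)
  have pe: "poly_eval scale [:p0, p1 - p0:] t = scale 1 p0 + scale t (p1 - p0)" for t
    by (subst poly_eval_ext[OF M, where n=1]) (simp_all add: degree_pCons_le)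
  have "spec_tilde scale H 0 = (f, p0, s)" "spec_tilde scale H 1 = (f, p1, s)"
    by (simp_all add: spec_tilde_def H_def de pe)
  then have "((f, p0, s), (f, p1, s)) = (spec_tilde scale H 0, spec_tilde scale H 1)" by simp
  with H show ?thesis unfolding homot_tilde_def by blast
qed


lemma equiv_gen_equiv: "equiv UNIV (equiv_gen R)"
  unfolding equiv_gen_def
  by (intro equivI refl_rtrancl sym_rtrancl trans_rtrancl) (auto simp: sym_def)

lemma equiv_gen_step: "(x, y) \<in> R \<Longrightarrow> (x, y) \<in> equiv_gen R"
  unfolding equiv_gen_def by auto

lemma equiv_gen_sym: "(x, y) \<in> equiv_gen R \<Longrightarrow> (y, x) \<in> equiv_gen R"
  using equiv_gen_equiv[of R] unfolding equiv_def sym_def by blast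

lemma equiv_gen_trans: "(x, y) \<in> equiv_gen R \<Longrightarrow> (y, z) \<in> equiv_gen R \<Longrightarrow> (x, z) \<in> equiv_gen R"
  using equiv_gen_equiv[of R] unfolding equiv_def trans_def by blast

lemma equiv_gen_map:
  assumes "\<And>x y. (x, y) \<in> R \<Longrightarrow> (g x, g y) \<in> R'"
    and "(x, y) \<in> equiv_gen R"
  shows "(g x, g y) \<in> equiv_gen R'"
  using assms(2) unfolding equiv_gen_def
proof (induction rule: rtrancl_induct)
  case base then show ?case by simp
next
  case (step y z)
  then have "(g y, g z) \<in> R' \<union> R'\<inverse>" using assms(1) by auto
  with step.IH show ?case by (rule rtrancl_into_rtrancl)
qed

lemma nu_in_QQ: "x \<in> Qtilde scale \<Longrightarrow> nu x \<in> QQ scale"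
proof -
  assume x: "x \<in> Qtilde scale"
  obtain f p s where xx: "x = (f, p, s)" by (cases x) auto
  have "f p = s * (1 - s)" using x by (simp add: Qtilde_def xx algebra_simps)
  then show ?thesis using x by (auto simp: QQ_def Qtilde_def xx nu_def intro: range_eqI[of _ _ p])
qed

lemma nu_edge:
  assumes "(x, y) \<in> homot_tilde scale"
  shows "(nu x, nu y) \<in> homot_QQ scale"
proof -
  obtain H where H: "H \<in> Qtilde (polyscale scale)" and xy: "x = spec_tilde scale H 0" "y = spec_tilde scale H 1"
    using assms unfolding homot_tilde_def by blast
  obtain F p S where HH: "H = (F, p, S)" by (cases H) auto
  have G: "(F, S) \<in> QQ (polyscale scale)"
    using nu_in_QQ[OF H] by (simp add: HH nu_def)
  have "nu x = spec_QQ (F, S) 0" "nu y = spec_QQ (F, S) 1"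
    by (simp_all add: xy HH nu_def spec_tilde_def spec_QQ_def)
  with G show ?thesis unfolding homot_QQ_def by blast
qed


lemma fiber_R:
  assumes M: "module scale" and x: "x \<in> Qtilde scale" and y: "y \<in> Qtilde scale" and e: "nu x = nu y"
  shows "(x, y) \<in> equiv_gen (homot_tilde scale)"
proof -
  obtain f p s where xx: "x = (f, p, s)" by (cases x) auto
  obtain g q t where yy: "y = (g, q, t)" by (cases y) auto
  have gt: "g = f" "t = s" using e by (simp_all add: xx yy nu_def)
  have f: "module_hom scale (*) f" and E: "f p + s * (s - 1) = 0" and E1: "f q + s * (s - 1) = 0"
    using x y by (auto simp: Qtilde_def xx yy gt)
  have "f q = f p" using E E1 by (metis add_right_cancel)
  from fiber_homot[OF M f E this] show ?thesis
    by (simp add: xx yy gt equiv_gen_step)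
qed

lemma R_closed:
  assumes M: "module scale" and "(x, y) \<in> equiv_gen (homot_tilde scale)" and "x \<in> Qtilde scale"
  shows "y \<in> Qtilde scale"
  using assms(2,3) unfolding equiv_gen_def
proof (induction rule: rtrancl_induct)
  case base then show ?case by simp
next
  case (step y z)
  then show ?case using spec_tilde_in[OF M] unfolding homot_tilde_def by auto
qed

lemma lift_edge:
  assumes M: "module scale" and G: "G \<in> QQ (polyscale scale)"
  obtains a0 a1 where "a0 \<in> Qtilde scale" "a1 \<in> Qtilde scale" "nu a0 = spec_QQ G 0" "nu a1 = spec_QQ G 1"
    "(a0, a1) \<in> homot_tilde scale"
proof -
  obtain F S where GG: "G = (F, S)" by (cases G) auto
  obtain p where F: "module_hom (polyscale scale) (*) F" and p: "S * (1 - S) = F p"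
    using G by (auto simp: QQ_def GG)
  have "F p + S * (S - 1) = 0" using p by (simp add: algebra_simps)
  then have H: "(F, p, S) \<in> Qtilde (polyscale scale)" using F by (simp add: Qtilde_def)
  show ?thesis
  proof (rule that[of "spec_tilde scale (F, p, S) 0" "spec_tilde scale (F, p, S) 1"])
    show "spec_tilde scale (F, p, S) 0 \<in> Qtilde scale" "spec_tilde scale (F, p, S) 1 \<in> Qtilde scale"
      by (rule spec_tilde_in[OF M H])+
    show "nu (spec_tilde scale (F, p, S) 0) = spec_QQ G 0" "nu (spec_tilde scale (F, p, S) 1) = spec_QQ G 1"
      by (simp_all add: GG nu_def spec_tilde_def spec_QQ_def)
    show "(spec_tilde scale (F, p, S) 0, spec_tilde scale (F, p, S) 1) \<in> homot_tilde scale"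
      unfolding homot_tilde_def using H by blast
  qed
qed

lemma lift_path:
  assumes M: "module scale" and "(nu z, w) \<in> equiv_gen (homot_QQ scale)" and z: "z \<in> Qtilde scale"
  shows "\<exists>z'\<in>Qtilde scale. nu z' = w \<and> (z, z') \<in> equiv_gen (homot_tilde scale)"
  using assms(2) unfolding equiv_gen_def[of "homot_QQ scale"]
proof (induction rule: rtrancl_induct)
  case base then show ?case using z by (auto simp: equiv_gen_def)
next
  case (step w w')
  from step.IH obtain z' where z': "z' \<in> Qtilde scale" "nu z' = w" "(z, z') \<in> equiv_gen (homot_tilde scale)"
    by blast
  from step.hyps(2) obtain G where G: "G \<in> QQ (polyscale scale)"
    and ww: "(w = spec_QQ G 0 \<and> w' = spec_QQ G 1) \<or> (w = spec_QQ G 1 \<and> w' = spec_QQ G 0)"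
    unfolding homot_QQ_def by blast
  obtain a0 a1 where a: "a0 \<in> Qtilde scale" "a1 \<in> Qtilde scale" "nu a0 = spec_QQ G 0" "nu a1 = spec_QQ G 1"
    "(a0, a1) \<in> homot_tilde scale"
    using lift_edge[OF M G] by blast
  have a01: "(a0, a1) \<in> equiv_gen (homot_tilde scale)" "(a1, a0) \<in> equiv_gen (homot_tilde scale)"
    using a(5) by (auto intro: equiv_gen_step equiv_gen_sym)
  from ww show ?case
  proof
    assume h: "w = spec_QQ G 0 \<and> w' = spec_QQ G 1"
    have "(z', a0) \<in> equiv_gen (homot_tilde scale)" using fiber_R[OF M z'(1) a(1)] z'(2) a(3) h by simp
    then have "(z, a1) \<in> equiv_gen (homot_tilde scale)" using z'(3) a01 by (blast intro: equiv_gen_trans)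
    then show ?thesis using a h by blast
  next
    assume h: "w = spec_QQ G 1 \<and> w' = spec_QQ G 0"
    have "(z', a1) \<in> equiv_gen (homot_tilde scale)" using fiber_R[OF M z'(1) a(2)] z'(2) a(4) h by simp
    then have "(z, a0) \<in> equiv_gen (homot_tilde scale)" using z'(3) a01 by (blast intro: equiv_gen_trans)
    then show ?thesis using a h by blast
  qed
qed

theorem theorem2p7:
  fixes scale :: "'a::comm_ring_1 \<Rightarrow> 'b::ab_group_add \<Rightarrow> 'b"
  assumes "noetherian_ring TYPE('a)"
    and "projective_module scale"
  shows "(\<forall>x\<in>Qtilde scale. nu x \<in> QQ scale)
    \<and> (\<forall>x\<in>Qtilde scale. \<forall>y\<in>Qtilde scale.
          (x, y) \<in> equiv_gen (homot_tilde scale) \<longrightarrow>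
          (nu x, nu y) \<in> equiv_gen (homot_QQ scale))
    \<and> bij_betw (nu_bar scale) (pi0_tilde scale) (pi0_QQ scale)"
proof -
  have M: "module scale" using assms(2) by (simp add: projective_module_def)
  define R where "R = equiv_gen (homot_tilde scale)"
  define S where "S = equiv_gen (homot_QQ scale)"
  have RS: "(x, y) \<in> R \<Longrightarrow> (nu x, nu y) \<in> S" for x y
    unfolding R_def S_def by (rule equiv_gen_map[OF nu_edge])
  have eqS: "equiv UNIV S" "equiv UNIV R" unfolding S_def R_def by (rule equiv_gen_equiv)+
  have nb: "nu_bar scale (R `` {x}) = S `` {nu x}" for x
  proof -
    have "(\<lambda>y. S `` {nu y}) ` (R `` {x}) = {S `` {nu x}}"
    proof -
      have "S `` {nu y} = S `` {nu x}" if "y \<in> R `` {x}" for y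
      proof -
        have "(nu x, nu y) \<in> S" using that RS by blast
        then show ?thesis using equiv_class_eq[OF eqS(1)] by metis
      qed
      moreover have "x \<in> R `` {x}" unfolding R_def equiv_gen_def by simp
      ultimately show ?thesis by blast
    qed
    then show ?thesis by (simp add: nu_bar_def S_def)
  qed
  have p1: "\<forall>x\<in>Qtilde scale. nu x \<in> QQ scale" using nu_in_QQ by blast
  have p2: "\<forall>x\<in>Qtilde scale. \<forall>y\<in>Qtilde scale. (x, y) \<in> R \<longrightarrow> (nu x, nu y) \<in> S"
    using RS by blast
  have inj: "inj_on (nu_bar scale) (pi0_tilde scale)"
  proof (rule inj_onI)
    fix X Y assume X: "X \<in> pi0_tilde scale" and Y: "Y \<in> pi0_tilde scale" and e: "nu_bar scale X = nu_bar scale Y"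
    obtain x where x: "x \<in> Qtilde scale" "X = R `` {x}" using X unfolding pi0_tilde_def R_def by (auto elim: quotientE)
    obtain y where y: "y \<in> Qtilde scale" "Y = R `` {y}" using Y unfolding pi0_tilde_def R_def by (auto elim: quotientE)
    have "S `` {nu x} = S `` {nu y}" using e by (simp add: x y nb)
    then have "(nu x, nu y) \<in> S" using eqS(1) by (simp add: eq_equiv_class_iff)
    then obtain z' where z': "z' \<in> Qtilde scale" "nu z' = nu y" "(x, z') \<in> R"
      using lift_path[OF M _ x(1)] unfolding S_def R_def by blast
    have "(z', y) \<in> R" using fiber_R[OF M z'(1) y(1) z'(2)] by (simp add: R_def)
    then have "(x, y) \<in> R" using z'(3) unfolding R_def by (blast intro: equiv_gen_trans)
    then show "X = Y" using eqS(2) by (simp add: x y eq_equiv_class_iff)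
  qed
  have img: "nu_bar scale ` pi0_tilde scale = pi0_QQ scale"
  proof
    show "nu_bar scale ` pi0_tilde scale \<subseteq> pi0_QQ scale"
    proof
      fix W assume "W \<in> nu_bar scale ` pi0_tilde scale"
      then obtain x where x: "x \<in> Qtilde scale" "W = nu_bar scale (R `` {x})"
        unfolding pi0_tilde_def R_def by (auto elim!: quotientE)
      then show "W \<in> pi0_QQ scale" using nu_in_QQ[OF x(1)]
        unfolding pi0_QQ_def by (simp add: nb S_def quotientI)
    qed
  next
    show "pi0_QQ scale \<subseteq> nu_bar scale ` pi0_tilde scale"
    proof
      fix W assume "W \<in> pi0_QQ scale"
      then obtain w where w: "w \<in> QQ scale" "W = S `` {w}"
        unfolding pi0_QQ_def S_def by (auto elim!: quotientE)
      obtain f s where ww: "w = (f, s)" by (cases w) auto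
      obtain p where f: "module_hom scale (*) f" and p: "s * (1 - s) = f p"
        using w(1) by (auto simp: QQ_def ww)
      have "f p + s * (s - 1) = 0" using p by (simp add: algebra_simps)
      then have x: "(f, p, s) \<in> Qtilde scale" using f by (simp add: Qtilde_def)
      have "W = nu_bar scale (R `` {(f, p, s)})" by (simp add: nb w(2) ww nu_def)
      moreover have "R `` {(f, p, s)} \<in> pi0_tilde scale"
        unfolding pi0_tilde_def R_def using x by (rule quotientI)
      ultimately show "W \<in> nu_bar scale ` pi0_tilde scale" by blast
    qed
  qed
  show ?thesis using p1 p2 inj img unfolding R_def S_def bij_betw_def by blast
qed

end
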